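(* Let $\Gamma_1,\Gamma_2$ be propositional theories over $\mathcal L$ and let $e\in\{c,a,s,u\}$. Then the following are equivalent: (1) $\Gamma_1\equiv_e\Gamma_2$; (2) $C_e(\Gamma_1)=C_e(\Gamma_2)$; (3) $E_e(\Gamma_1)=E_e(\Gamma_2)$.
   Context: A propositional signature $\mathcal L$ is a set of atoms. Formulas are built from atoms and $\bot$ using $\wedge,\vee,\to$; $\neg\phi$ abbreviates $\phi\to\bot$. A theory is a set of formulas. An HT-interpretation over $\mathcal L$ is a pair $(X,Y)$ with $X\subseteq Y\subseteq\mathcal L$; it is total if $X=Y$. $Y\models\phi$ denotes classical satisfaction. HT-satisfaction: $(X,Y)\models a$ iff $a\in X$ for an atom $a$; $(X,Y)\not\models\bot$; $\wedge,\vee$ componentwise; $(X,Y)\models\phi\to\psi$ iff (i) $(X,Y)\not\models\phi$ or $(X,Y)\models\psi$, and (ii) $Y\models\phi\to\psi$. $(X,Y)\models\Gamma$ iff it satisfies every formula of $\Gamma$. A total $(Y,Y)$ is an equilibrium model of $\Gamma$ iff $(Y,Y)\models\Gamma$ and $(X,Y)\not\models\Gamma$ for all $X\subsetneq Y$; then $Y$ is an answer set of $\Gamma$. A formula is factual if it is built from atoms and $\bot$ using only $\wedge,\vee$ and implications of the form $\phi\to\bot$. For theories $\Gamma_1,\Gamma_2$ over $\mathcal L$: $\Gamma_1\equiv_c\Gamma_2$ iff they have the same classical models; $\Gamma_1\equiv_a\Gamma_2$ iff they have the same answer sets; $\Gamma_1\equiv_s\Gamma_2$ iff for every $\mathcal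 L'\supseteq\mathcal L$ and every theory $\Gamma$ over $\mathcal L'$, $\Gamma_1\cup\Gamma$ and $\Gamma_2\cup\Gamma$ have the same answer sets; $\Gamma_1\equiv_u\Gamma_2$ iff the same holds for every factual theory $\Gamma$ over every $\mathcal L'\supseteq\mathcal L$. $C_s(\Gamma)$ is the set of HT-countermodels of $\Gamma$ (HT-interpretations over $\mathcal L$ not satisfying $\Gamma$). A here-countermodel is an HT-countermodel $(X,Y)$ with $Y\models\Gamma$; $E_s(\Gamma)$ is the set of equivalence interpretations, i.e. total HT-models of $\Gamma$ together with here-countermodels of $\Gamma$. For a set $S$ of HT-interpretations: a total $(Y,Y)$ is total-closed in $S$ if $(X,Y)\in S$ for every $X\subseteq Y$; $(X,Y)$ is closed in $S$ if $(X',Y)\in S$ for every $X\subseteq X'\subseteq Y$; $(X,Y)$ is there-closed in $S$ if $(Y,Y)\notin S$ and $(X',Y)\in S$ for every $X\subseteq X'\subsetneq Y$. Define: $C_c(\Gamma)$, $E_c(\Gamma)$ = the total interpretations in $C_s(\Gamma)$, resp. $E_s(\Gamma)$; $C_a(\Gamma)$ = the set of HT-interpretations of the form $(\emptyset,Y)$ that are there-closed in $C_s(\Gamma)$; $E_a(\Gamma)$ = the set of total interpretations that are total-closed in $E_s(\Gamma)$; $C_u(\Gamma)$ = the set of HT-interpretations that are there-closed in $C_s(\Gamma)$; $E_u(\Gamma)$ = the set of HT-interpretations that are closed in $E_s(\Gamma)$. *)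

theory Defs
  imports Main
begin

datatype 'a form = Atom 'a | Bot | And "'a form" "'a form" | Or "'a form" "'a form"
  | Imp "'a form" "'a form"

definition Neg :: "'a form \<Rightarrow> 'a form" where
  "Neg \<phi> = Imp \<phi> Bot"

fun atoms :: "'a form \<Rightarrow> 'a set" where
  "atoms (Atom a) = {a}"
| "atoms Bot = {}"
| "atoms (And \<phi> \<psi>) = atoms \<phi> \<union> atoms \<psi>"
| "atoms (Or \<phi> \<psi>) = atoms \<phi> \<union> atoms \<psi>"
| "atoms (Imp \<phi> \<psi>) = atoms \<phi> \<union> atoms \<psi>"

definition theory_over :: "'a set \<Rightarrow> 'a form set \<Rightarrow> bool" where
  "theory_over L \<Gamma> \<longleftrightarrow> (\<forall>\<phi>\<in>\<Gamma>. atoms \<phi> \<subseteq> L)"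

inductive factual :: "'a form \<Rightarrow> bool" where
  "factual (Atom a)"
| "factual Bot"
| "factual \<phi> \<Longrightarrow> factual \<psi> \<Longrightarrow> factual (And \<phi> \<psi>)"
| "factual \<phi> \<Longrightarrow> factual \<psi> \<Longrightarrow> factual (Or \<phi> \<psi>)"
| "factual \<phi> \<Longrightarrow> factual (Imp \<phi> Bot)"

fun csat :: "'a set \<Rightarrow> 'a form \<Rightarrow> bool" where
  "csat Y (Atom a) = (a \<in> Y)"
| "csat Y Bot = False"
| "csat Y (And \<phi> \<psi>) = (csat Y \<phi> \<and> csat Y \<psi>)"
| "csat Y (Or \<phi> \<psi>) = (csat Y \<phi> \<or> csat Y \<psi>)"
| "csat Y (Imp \<phi> \<psi>) = (csat Y \<phi> \<longrightarrow> csat Y \<psi>)"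

fun htsat :: "'a set \<Rightarrow> 'a set \<Rightarrow> 'a form \<Rightarrow> bool" where
  "htsat X Y (Atom a) = (a \<in> X)"
| "htsat X Y Bot = False"
| "htsat X Y (And \<phi> \<psi>) = (htsat X Y \<phi> \<and> htsat X Y \<psi>)"
| "htsat X Y (Or \<phi> \<psi>) = (htsat X Y \<phi> \<or> htsat X Y \<psi>)"
| "htsat X Y (Imp \<phi> \<psi>) =
     ((\<not> htsat X Y \<phi> \<or> htsat X Y \<psi>) \<and> csat Y (Imp \<phi> \<psi>))"

definition csat_th :: "'a set \<Rightarrow> 'a form set \<Rightarrow> bool" where
  "csat_th Y \<Gamma> \<longleftrightarrow> (\<forall>\<phi>\<in>\<Gamma>. csat Y \<phi>)"

definition htsat_th :: "'a set \<Rightarrow> 'a set \<Rightarrow> 'a form set \<Rightarrow> bool" where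
  "htsat_th X Y \<Gamma> \<longleftrightarrow> (\<forall>\<phi>\<in>\<Gamma>. htsat X Y \<phi>)"

definition ht_interps :: "'a set \<Rightarrow> ('a set \<times> 'a set) set" where
  "ht_interps L = {(X, Y). X \<subseteq> Y \<and> Y \<subseteq> L}"

definition classical_models :: "'a set \<Rightarrow> 'a form set \<Rightarrow> 'a set set" where
  "classical_models L \<Gamma> = {Y. Y \<subseteq> L \<and> csat_th Y \<Gamma>}"

definition equilibrium_model :: "'a set \<Rightarrow> 'a form set \<Rightarrow> 'a set \<Rightarrow> bool" where
  "equilibrium_model L \<Gamma> Y \<longleftrightarrow> Y \<subseteq> L \<and> htsat_th Y Y \<Gamma> \<and>
     (\<forall>X. X \<subset> Y \<longrightarrow> \<not> htsat_th X Y \<Gamma>)"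

definition answer_sets :: "'a set \<Rightarrow> 'a form set \<Rightarrow> 'a set set" where
  "answer_sets L \<Gamma> = {Y. equilibrium_model L \<Gamma> Y}"

datatype eqkind = EqC | EqA | EqS | EqU

definition strongly_equiv :: "'a set \<Rightarrow> 'a form set \<Rightarrow> 'a form set \<Rightarrow> bool" where
  "strongly_equiv L \<Gamma>1 \<Gamma>2 \<longleftrightarrow>
     (\<forall>L' \<Gamma>. L \<subseteq> L' \<longrightarrow> theory_over L' \<Gamma> \<longrightarrow>
        answer_sets L' (\<Gamma>1 \<union> \<Gamma>) = answer_sets L' (\<Gamma>2 \<union> \<Gamma>))"

definition uniformly_equiv :: "'a set \<Rightarrow> 'a form set \<Rightarrow> 'a form set \<Rightarrow> bool" where
  "uniformly_equiv L \<Gamma>1 \<Gamma>2 \<longleftrightarrow>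
     (\<forall>L' \<Gamma>. L \<subseteq> L' \<longrightarrow> theory_over L' \<Gamma> \<longrightarrow> (\<forall>\<phi>\<in>\<Gamma>. factual \<phi>) \<longrightarrow>
        answer_sets L' (\<Gamma>1 \<union> \<Gamma>) = answer_sets L' (\<Gamma>2 \<union> \<Gamma>))"

fun equiv_e :: "eqkind \<Rightarrow> 'a set \<Rightarrow> 'a form set \<Rightarrow> 'a form set \<Rightarrow> bool" where
  "equiv_e EqC L \<Gamma>1 \<Gamma>2 = (classical_models L \<Gamma>1 = classical_models L \<Gamma>2)"
| "equiv_e EqA L \<Gamma>1 \<Gamma>2 = (answer_sets L \<Gamma>1 = answer_sets L \<Gamma>2)"
| "equiv_e EqS L \<Gamma>1 \<Gamma>2 = strongly_equiv L \<Gamma>1 \<Gamma>2"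
| "equiv_e EqU L \<Gamma>1 \<Gamma>2 = uniformly_equiv L \<Gamma>1 \<Gamma>2"

definition Cs :: "'a set \<Rightarrow> 'a form set \<Rightarrow> ('a set \<times> 'a set) set" where
  "Cs L \<Gamma> = {(X, Y) \<in> ht_interps L. \<not> htsat_th X Y \<Gamma>}"

definition Es :: "'a set \<Rightarrow> 'a form set \<Rightarrow> ('a set \<times> 'a set) set" where
  "Es L \<Gamma> = {(X, Y) \<in> ht_interps L.
      (X = Y \<and> htsat_th Y Y \<Gamma>) \<or> (\<not> htsat_th X Y \<Gamma> \<and> csat_th Y \<Gamma>)}"

definition total_closed :: "('a set \<times> 'a set) set \<Rightarrow> 'a set \<times> 'a set \<Rightarrow> bool" where
  "total_closed S I \<longleftrightarrow> fst I = snd I \<and> (\<forall>X. X \<subseteq> snd I \<longrightarrow> (X, snd I) \<in> S)"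

definition closed_in :: "('a set \<times> 'a set) set \<Rightarrow> 'a set \<times> 'a set \<Rightarrow> bool" where
  "closed_in S I \<longleftrightarrow> (\<forall>X'. fst I \<subseteq> X' \<and> X' \<subseteq> snd I \<longrightarrow> (X', snd I) \<in> S)"

definition there_closed :: "('a set \<times> 'a set) set \<Rightarrow> 'a set \<times> 'a set \<Rightarrow> bool" where
  "there_closed S I \<longleftrightarrow> (snd I, snd I) \<notin> S \<and>
     (\<forall>X'. fst I \<subseteq> X' \<and> X' \<subset> snd I \<longrightarrow> (X', snd I) \<in> S)"

fun Ce :: "eqkind \<Rightarrow> 'a set \<Rightarrow> 'a form set \<Rightarrow> ('a set \<times> 'a set) set" where
  "Ce EqC L \<Gamma> = {I \<in> Cs L \<Gamma>. fst I = snd I}"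
| "Ce EqA L \<Gamma> = {I \<in> ht_interps L. fst I = {} \<and> there_closed (Cs L \<Gamma>) I}"
| "Ce EqS L \<Gamma> = Cs L \<Gamma>"
| "Ce EqU L \<Gamma> = {I \<in> ht_interps L. there_closed (Cs L \<Gamma>) I}"

fun Ee :: "eqkind \<Rightarrow> 'a set \<Rightarrow> 'a form set \<Rightarrow> ('a set \<times> 'a set) set" where
  "Ee EqC L \<Gamma> = {I \<in> Es L \<Gamma>. fst I = snd I}"
| "Ee EqA L \<Gamma> = {I \<in> ht_interps L. total_closed (Es L \<Gamma>) I}"
| "Ee EqS L \<Gamma> = Es L \<Gamma>"
| "Ee EqU L \<Gamma> = {I \<in> ht_interps L. closed_in (Es L \<Gamma>) I}"

end

theory Submission
  imports Defs
begin

lemma ht_total[simp]: "htsat Y Y \<phi> = csat Y \<phi>" by (induction \<phi>) auto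

lemma persist: "X \<subseteq> Y \<Longrightarrow> htsat X Y \<phi> \<Longrightarrow> csat Y \<phi>" by (induction \<phi>) auto

lemma loc2: "atoms \<phi> \<subseteq> L \<Longrightarrow> csat Y \<phi> = csat (Y \<inter> L) \<phi>"
  by (induction \<phi>) auto

lemma loc1: "atoms \<phi> \<subseteq> L \<Longrightarrow> htsat X Y \<phi> = htsat (X \<inter> L) (Y \<inter> L) \<phi>"
proof (induction \<phi>)
  case (Imp a b)
  then have la: "atoms a \<subseteq> L" and lb: "atoms b \<subseteq> L" by auto
  show ?case using Imp.IH(1)[OF la] Imp.IH(2)[OF lb] loc2[OF la, of Y] loc2[OF lb, of Y] by simp
qed auto

lemma fact_mono: "factual \<phi> \<Longrightarrow> htsat X Y \<phi> \<Longrightarrow> X \<subseteq> X' \<Longrightarrow> X' \<subseteq> Y \<Longrightarrow> htsat X' Y \<phi>"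
proof (induction rule: factual.induct)
  case (5 \<phi>)
  have "\<not> htsat X' Y \<phi>" using persist[OF 5(5)] 5(3) by auto
  then show ?case using 5(3) by simp
qed auto

lemma th_total[simp]: "htsat_th Y Y \<Gamma> = csat_th Y \<Gamma>"
  unfolding htsat_th_def csat_th_def by simp

lemma th_persist: "X \<subseteq> Y \<Longrightarrow> htsat_th X Y \<Gamma> \<Longrightarrow> csat_th Y \<Gamma>"
  unfolding htsat_th_def csat_th_def using persist by blast

lemma th_loc: "theory_over L \<Gamma> \<Longrightarrow> htsat_th X Y \<Gamma> = htsat_th (X \<inter> L) (Y \<inter> L) \<Gamma>"
proof -
  assume o: "theory_over L \<Gamma>"
  have "htsat X Y \<phi> = htsat (X \<inter> L) (Y \<inter> L) \<phi>" if "\<phi> \<in> \<Gamma>" for \<phi>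
  proof -
    have "atoms \<phi> \<subseteq> L" using o that unfolding theory_over_def by blast
    then show ?thesis by (rule loc1)
  qed
  then show ?thesis unfolding htsat_th_def Ball_def by simp
qed

lemma th_cloc: "theory_over L \<Gamma> \<Longrightarrow> csat_th Y \<Gamma> = csat_th (Y \<inter> L) \<Gamma>"
proof -
  assume o: "theory_over L \<Gamma>"
  have "csat Y \<phi> = csat (Y \<inter> L) \<phi>" if "\<phi> \<in> \<Gamma>" for \<phi>
  proof -
    have "atoms \<phi> \<subseteq> L" using o that unfolding theory_over_def by blast
    then show ?thesis by (rule loc2)
  qed
  then show ?thesis unfolding csat_th_def Ball_def by simp
qed

lemma th_union[simp]: "htsat_th X Y (A \<union> B) = (htsat_th X Y A \<and> htsat_th X Y B)"
  "csat_th Y (A \<union> B) = (csat_th Y A \<and> csat_th Y B)"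
  unfolding htsat_th_def csat_th_def by auto

lemma th_facts[simp]: "htsat_th X Y (Atom ` S) = (S \<subseteq> X)" "csat_th Y (Atom ` S) = (S \<subseteq> Y)"
  unfolding htsat_th_def csat_th_def by auto

lemma over_facts: "S \<subseteq> L \<Longrightarrow> theory_over L (Atom ` S)"
  unfolding theory_over_def by auto

lemma factual_facts: "\<forall>\<phi>\<in>Atom ` S. factual \<phi>"
  by (auto intro: factual.intros)

lemma as_facts: "Y \<subseteq> L \<Longrightarrow> csat_th Y \<Gamma> \<Longrightarrow> Y \<in> answer_sets L (\<Gamma> \<union> Atom ` Y)"
  unfolding answer_sets_def equilibrium_model_def by auto

lemma as_csat: "Y \<in> answer_sets L \<Gamma> \<Longrightarrow> csat_th Y \<Gamma>"
  unfolding answer_sets_def equilibrium_model_def by auto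

lemma Cs_mem: "(X,Y) \<in> Cs L \<Gamma> \<longleftrightarrow> X \<subseteq> Y \<and> Y \<subseteq> L \<and> \<not> htsat_th X Y \<Gamma>"
  unfolding Cs_def ht_interps_def by auto

lemma Es_mem: "(X,Y) \<in> Es L \<Gamma> \<longleftrightarrow> X \<subseteq> Y \<and> Y \<subseteq> L \<and> csat_th Y \<Gamma> \<and> (X = Y \<or> \<not> htsat_th X Y \<Gamma>)"
  unfolding Es_def ht_interps_def by auto

lemma CeC: "Ce EqC L \<Gamma> = {(Y,Y) | Y. Y \<subseteq> L \<and> \<not> csat_th Y \<Gamma>}"
  unfolding Ce.simps Cs_def ht_interps_def by auto

lemma EeC: "Ee EqC L \<Gamma> = {(Y,Y) | Y. Y \<subseteq> L \<and> csat_th Y \<Gamma>}"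
  unfolding Ee.simps Es_def ht_interps_def by auto

lemma diag_eq: "({(Y,Y)|Y. P Y} = {(Y,Y)|Y. Q Y}) = (\<forall>Y. P Y = Q Y)"
proof
  assume h: "{(Y,Y)|Y. P Y} = {(Y,Y)|Y. Q Y}"
  show "\<forall>Y. P Y = Q Y"
  proof
    fix Y
    have "(Y,Y) \<in> {(Y,Y)|Y. P Y} \<longleftrightarrow> (Y,Y) \<in> {(Y,Y)|Y. Q Y}" using h by simp
    then show "P Y = Q Y" by simp
  qed
qed auto

lemma caseC: "(equiv_e EqC L \<Gamma>1 \<Gamma>2 \<longleftrightarrow> Ce EqC L \<Gamma>1 = Ce EqC L \<Gamma>2) \<and>
         (Ce EqC L \<Gamma>1 = Ce EqC L \<Gamma>2 \<longleftrightarrow> Ee EqC L \<Gamma>1 = Ee EqC L \<Gamma>2)"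
proof -
  have a: "Ce EqC L \<Gamma>1 = Ce EqC L \<Gamma>2 \<longleftrightarrow> (\<forall>Y. Y \<subseteq> L \<longrightarrow> (csat_th Y \<Gamma>1 \<longleftrightarrow> csat_th Y \<Gamma>2))"
    unfolding CeC diag_eq by auto
  have b: "Ee EqC L \<Gamma>1 = Ee EqC L \<Gamma>2 \<longleftrightarrow> (\<forall>Y. Y \<subseteq> L \<longrightarrow> (csat_th Y \<Gamma>1 \<longleftrightarrow> csat_th Y \<Gamma>2))"
    unfolding EeC diag_eq by auto
  have c: "equiv_e EqC L \<Gamma>1 \<Gamma>2 \<longleftrightarrow> (\<forall>Y. Y \<subseteq> L \<longrightarrow> (csat_th Y \<Gamma>1 \<longleftrightarrow> csat_th Y \<Gamma>2))"
    unfolding equiv_e.simps classical_models_def by (auto simp: set_eq_iff)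
  show ?thesis using a b c by blast
qed

lemma thc_Cs: "Y \<subseteq> L \<Longrightarrow> there_closed (Cs L \<Gamma>) (X,Y) \<longleftrightarrow>
   csat_th Y \<Gamma> \<and> (\<forall>X'. X \<subseteq> X' \<and> X' \<subset> Y \<longrightarrow> \<not> htsat_th X' Y \<Gamma>)"
  unfolding there_closed_def Cs_mem fst_conv snd_conv by auto

lemma img_pair1[simp]: "(X,Y) \<in> (\<lambda>Y. ({},Y)) ` A \<longleftrightarrow> X = {} \<and> Y \<in> A" by auto
lemma img_pair2[simp]: "(X,Y) \<in> (\<lambda>Y. (Y,Y)) ` A \<longleftrightarrow> X = Y \<and> Y \<in> A" by auto

lemma CeA': "Ce EqA L \<Gamma> = (\<lambda>Y. ({},Y)) ` answer_sets L \<Gamma>"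
proof -
  have "(X,Y) \<in> Ce EqA L \<Gamma> \<longleftrightarrow> (X,Y) \<in> (\<lambda>Y. ({},Y)) ` answer_sets L \<Gamma>" for X Y
  proof (cases "Y \<subseteq> L")
    case True
    have "(X,Y) \<in> Ce EqA L \<Gamma> \<longleftrightarrow> X = {} \<and> csat_th Y \<Gamma> \<and> (\<forall>X'. X \<subseteq> X' \<and> X' \<subset> Y \<longrightarrow> \<not> htsat_th X' Y \<Gamma>)"
      using thc_Cs[OF True, of \<Gamma> X] True by (auto simp: ht_interps_def)
    also have "\<dots> \<longleftrightarrow> X = {} \<and> Y \<in> answer_sets L \<Gamma>"
      using True unfolding answer_sets_def equilibrium_model_def th_total by auto
    finally show ?thesis by simp
  next
    case False
    then show ?thesis unfolding answer_sets_def equilibrium_model_def by (auto simp: ht_interps_def)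
  qed
  then show ?thesis by (intro set_eqI) (metis surj_pair)
qed

lemma tc_Es: "total_closed (Es L \<Gamma>) (X,Y) \<longleftrightarrow> X = Y \<and> Y \<in> answer_sets L \<Gamma>"
proof
  assume h: "total_closed (Es L \<Gamma>) (X,Y)"
  then have xy: "X = Y" and a: "\<forall>X'. X' \<subseteq> Y \<longrightarrow> (X',Y) \<in> Es L \<Gamma>"
    unfolding total_closed_def by auto
  have "Y \<subseteq> L \<and> csat_th Y \<Gamma>" using a[rule_format, of Y] unfolding Es_mem by simp
  moreover have "\<forall>X'. X' \<subset> Y \<longrightarrow> \<not> htsat_th X' Y \<Gamma>"
    using a unfolding Es_mem by blast
  ultimately show "X = Y \<and> Y \<in> answer_sets L \<Gamma>" using xy
    unfolding answer_sets_def equilibrium_model_def by simp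
next
  assume h: "X = Y \<and> Y \<in> answer_sets L \<Gamma>"
  then have yl: "Y \<subseteq> L" and c: "csat_th Y \<Gamma>" and m: "\<forall>X'. X' \<subset> Y \<longrightarrow> \<not> htsat_th X' Y \<Gamma>"
    unfolding answer_sets_def equilibrium_model_def by auto
  have "(X',Y) \<in> Es L \<Gamma>" if "X' \<subseteq> Y" for X'
  proof (cases "X' = Y")
    case True then show ?thesis using yl c unfolding Es_mem by simp
  next
    case False then have "X' \<subset> Y" using that by blast
    then show ?thesis using yl c m that unfolding Es_mem by blast
  qed
  then show "total_closed (Es L \<Gamma>) (X,Y)" using h unfolding total_closed_def by simp
qed

lemma EeA: "Ee EqA L \<Gamma> = (\<lambda>Y. (Y,Y)) ` answer_sets L \<Gamma>"
proof -
  have "(X,Y) \<in> Ee EqA L \<Gamma> \<longleftrightarrow> (X,Y) \<in> (\<lambda>Y. (Y,Y)) ` answer_sets L \<Gamma>" for X Y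
  proof -
    have "Y \<in> answer_sets L \<Gamma> \<Longrightarrow> Y \<subseteq> L"
      unfolding answer_sets_def equilibrium_model_def by simp
    then show ?thesis using tc_Es[of L \<Gamma> X Y] by (auto simp: ht_interps_def)
  qed
  then show ?thesis by (intro set_eqI) (metis surj_pair)
qed

lemma caseA: "(equiv_e EqA L \<Gamma>1 \<Gamma>2 \<longleftrightarrow> Ce EqA L \<Gamma>1 = Ce EqA L \<Gamma>2) \<and>
         (Ce EqA L \<Gamma>1 = Ce EqA L \<Gamma>2 \<longleftrightarrow> Ee EqA L \<Gamma>1 = Ee EqA L \<Gamma>2)"
proof -
  have i1: "inj (\<lambda>Y::'a set. (Y,Y))" by (auto intro: injI)
  have i2: "inj (\<lambda>Y::'a set. ({}::'a set,Y))" by (auto intro: injI)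
  show ?thesis unfolding CeA' EeA equiv_e.simps inj_image_eq_iff[OF i1] inj_image_eq_iff[OF i2] by simp
qed

definition H :: "'a set \<Rightarrow> 'a form set \<Rightarrow> 'a form set \<Rightarrow> bool" where
  "H L \<Gamma>1 \<Gamma>2 \<longleftrightarrow> (\<forall>X Y. X \<subseteq> Y \<longrightarrow> Y \<subseteq> L \<longrightarrow> (htsat_th X Y \<Gamma>1 \<longleftrightarrow> htsat_th X Y \<Gamma>2))"

lemma Cs_H: "Cs L \<Gamma>1 = Cs L \<Gamma>2 \<longleftrightarrow> H L \<Gamma>1 \<Gamma>2"
proof
  assume h: "Cs L \<Gamma>1 = Cs L \<Gamma>2"
  show "H L \<Gamma>1 \<Gamma>2" unfolding H_def
  proof (intro allI impI)
    fix X Y :: "'a set" assume "X \<subseteq> Y" "Y \<subseteq> L"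
    moreover have "(X,Y) \<in> Cs L \<Gamma>1 \<longleftrightarrow> (X,Y) \<in> Cs L \<Gamma>2" using h by simp
    ultimately show "htsat_th X Y \<Gamma>1 = htsat_th X Y \<Gamma>2" unfolding Cs_mem by blast
  qed
next
  assume "H L \<Gamma>1 \<Gamma>2"
  then show "Cs L \<Gamma>1 = Cs L \<Gamma>2" unfolding H_def
    by (auto simp: Cs_mem)
qed

lemma Es_H: "Es L \<Gamma>1 = Es L \<Gamma>2 \<longleftrightarrow> H L \<Gamma>1 \<Gamma>2"
proof
  assume h: "Es L \<Gamma>1 = Es L \<Gamma>2"
  show "H L \<Gamma>1 \<Gamma>2" unfolding H_def
  proof (intro allI impI)
    fix X Y :: "'a set" assume xy: "X \<subseteq> Y" and yl: "Y \<subseteq> L"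
    have m: "(X,Y) \<in> Es L \<Gamma>1 \<longleftrightarrow> (X,Y) \<in> Es L \<Gamma>2" using h by simp
    have t: "(Y,Y) \<in> Es L \<Gamma>1 \<longleftrightarrow> (Y,Y) \<in> Es L \<Gamma>2" using h by simp
    then have c: "csat_th Y \<Gamma>1 \<longleftrightarrow> csat_th Y \<Gamma>2" using yl unfolding Es_mem by simp
    show "htsat_th X Y \<Gamma>1 = htsat_th X Y \<Gamma>2"
    proof (cases "csat_th Y \<Gamma>1")
      case True
      then show ?thesis using m c xy yl unfolding Es_mem by auto
    next
      case False
      then show ?thesis using c xy th_persist by blast
    qed
  qed
next
  assume "H L \<Gamma>1 \<Gamma>2"
  then show "Es L \<Gamma>1 = Es L \<Gamma>2" unfolding H_def
    by (auto simp: Es_mem) (metis order_refl th_total)+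
qed

lemma H_SE:
  assumes o1: "theory_over L \<Gamma>1" and o2: "theory_over L \<Gamma>2" and h: "H L \<Gamma>1 \<Gamma>2"
  shows "strongly_equiv L \<Gamma>1 \<Gamma>2"
  unfolding strongly_equiv_def
proof (intro allI impI)
  fix L' \<Gamma> assume "L \<subseteq> L'" "theory_over L' \<Gamma>"
  have e: "htsat_th X Y \<Gamma>1 = htsat_th X Y \<Gamma>2" if "X \<subseteq> Y" for X Y
  proof -
    have hH: "\<And>X Y. X \<subseteq> Y \<Longrightarrow> Y \<subseteq> L \<Longrightarrow> htsat_th X Y \<Gamma>1 = htsat_th X Y \<Gamma>2"
      using h unfolding H_def by simp
    have s1: "X \<inter> L \<subseteq> Y \<inter> L" using that by (rule Int_mono) simp
    have "htsat_th (X \<inter> L) (Y \<inter> L) \<Gamma>1 = htsat_th (X \<inter> L) (Y \<inter> L) \<Gamma>2"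
      using hH[OF s1 Int_lower2] .
    then show ?thesis using th_loc[OF o1, of X Y] th_loc[OF o2, of X Y] by simp
  qed
  have e2: "htsat_th X Y (\<Gamma>1 \<union> \<Gamma>) = htsat_th X Y (\<Gamma>2 \<union> \<Gamma>)" if "X \<subseteq> Y" for X Y
    using e[OF that] by (simp only: th_union)
  have "equilibrium_model L' (\<Gamma>1 \<union> \<Gamma>) Y = equilibrium_model L' (\<Gamma>2 \<union> \<Gamma>) Y" for Y
  proof -
    have a: "htsat_th Y Y (\<Gamma>1 \<union> \<Gamma>) = htsat_th Y Y (\<Gamma>2 \<union> \<Gamma>)" using e2[OF order_refl] .
    have b: "(\<forall>X. X \<subset> Y \<longrightarrow> \<not> htsat_th X Y (\<Gamma>1 \<union> \<Gamma>)) = (\<forall>X. X \<subset> Y \<longrightarrow> \<not> htsat_th X Y (\<Gamma>2 \<union> \<Gamma>))"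
    proof (intro iffI allI impI)
      fix X assume h: "\<forall>X. X \<subset> Y \<longrightarrow> \<not> htsat_th X Y (\<Gamma>1 \<union> \<Gamma>)" and x: "X \<subset> Y"
      have "\<not> htsat_th X Y (\<Gamma>1 \<union> \<Gamma>)" using h x by blast
      then show "\<not> htsat_th X Y (\<Gamma>2 \<union> \<Gamma>)" using e2[OF psubset_imp_subset[OF x]] by metis
    next
      fix X assume h: "\<forall>X. X \<subset> Y \<longrightarrow> \<not> htsat_th X Y (\<Gamma>2 \<union> \<Gamma>)" and x: "X \<subset> Y"
      have "\<not> htsat_th X Y (\<Gamma>2 \<union> \<Gamma>)" using h x by blast
      then show "\<not> htsat_th X Y (\<Gamma>1 \<union> \<Gamma>)" using e2[OF psubset_imp_subset[OF x]] by metis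
    qed
    show ?thesis unfolding equilibrium_model_def using a b by (simp only:)
  qed
  then have "equilibrium_model L' (\<Gamma>1 \<union> \<Gamma>) = equilibrium_model L' (\<Gamma>2 \<union> \<Gamma>)" by (rule ext)
  then show "answer_sets L' (\<Gamma>1 \<union> \<Gamma>) = answer_sets L' (\<Gamma>2 \<union> \<Gamma>)"
    unfolding answer_sets_def by (simp only:)
qed

lemma SE_H:
  assumes se: "strongly_equiv L \<Gamma>1 \<Gamma>2"
  shows "H L \<Gamma>1 \<Gamma>2"
proof -
  have one: "htsat_th X Y \<Gamma>b" if se: "strongly_equiv L \<Gamma>a \<Gamma>b"
    and xy: "X \<subseteq> Y" and yl: "Y \<subseteq> L" and ha: "htsat_th X Y \<Gamma>a" for \<Gamma>a \<Gamma>b X Y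
  proof -
    have ca: "csat_th Y \<Gamma>a" using th_persist xy ha by blast
    have "Y \<in> answer_sets L (\<Gamma>a \<union> Atom ` Y)" using as_facts yl ca by blast
    moreover have "answer_sets L (\<Gamma>a \<union> Atom ` Y) = answer_sets L (\<Gamma>b \<union> Atom ` Y)"
      using se over_facts[OF yl] unfolding strongly_equiv_def by blast
    ultimately have cb: "csat_th Y \<Gamma>b" using as_csat by fastforce
    show ?thesis
    proof (rule ccontr)
      assume nb: "\<not> htsat_th X Y \<Gamma>b"
      then have xny: "X \<noteq> Y" using cb by auto
      define G where "G = Atom ` X \<union> {Imp (Atom a) (Atom b) | a b. a \<in> Y - X \<and> b \<in> Y - X}"
      have hG: "htsat_th X' Y G \<longleftrightarrow> X \<subseteq> X' \<and> (\<forall>a\<in>Y-X. \<forall>b\<in>Y-X. a \<in> X' \<longrightarrow> b \<in> X')" for X'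
      proof -
        have "htsat_th X' Y {Imp (Atom a) (Atom b) | a b. a \<in> Y - X \<and> b \<in> Y - X} \<longleftrightarrow>
              (\<forall>a\<in>Y-X. \<forall>b\<in>Y-X. htsat X' Y (Imp (Atom a) (Atom b)))"
          unfolding htsat_th_def by blast
        also have "\<dots> \<longleftrightarrow> (\<forall>a\<in>Y-X. \<forall>b\<in>Y-X. a \<in> X' \<longrightarrow> b \<in> X')" by auto
        finally show ?thesis unfolding G_def th_union th_facts by blast
      qed
      have cG: "csat_th Y G" unfolding G_def csat_th_def using xy by auto
      have oG: "theory_over L G" unfolding G_def theory_over_def using xy yl by auto
      have "Y \<in> answer_sets L (\<Gamma>b \<union> G)"
        unfolding answer_sets_def equilibrium_model_def
      proof (intro CollectI conjI allI impI)
        show "Y \<subseteq> L" by fact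
        show "htsat_th Y Y (\<Gamma>b \<union> G)" using cb cG by simp
        fix X' assume x': "X' \<subset> Y"
        show "\<not> htsat_th X' Y (\<Gamma>b \<union> G)"
        proof
          assume hh: "htsat_th X' Y (\<Gamma>b \<union> G)"
          then have g: "X \<subseteq> X' \<and> (\<forall>a\<in>Y-X. \<forall>b\<in>Y-X. a \<in> X' \<longrightarrow> b \<in> X')" using hG by simp
          show False
          proof (cases "X' = X")
            case True then show False using hh nb by simp
          next
            case False
            then obtain a where "a \<in> X' - X" using g by blast
            then have "Y \<subseteq> X'" using g x' by blast
            then show False using x' by blast
          qed
        qed
      qed
      moreover have "Y \<notin> answer_sets L (\<Gamma>a \<union> G)"
        unfolding answer_sets_def equilibrium_model_def
        using xy xny ha hG by auto
      moreover have "answer_sets L (\<Gamma>a \<union> G) = answer_sets L (\<Gamma>b \<union> G)"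
        using se oG unfolding strongly_equiv_def by blast
      ultimately show False by simp
    qed
  qed
  have se': "strongly_equiv L \<Gamma>2 \<Gamma>1" using se unfolding strongly_equiv_def by metis
  show ?thesis unfolding H_def using one[OF se] one[OF se'] by blast
qed

lemma caseS:
  assumes "theory_over L \<Gamma>1" and "theory_over L \<Gamma>2"
  shows "(equiv_e EqS L \<Gamma>1 \<Gamma>2 \<longleftrightarrow> Ce EqS L \<Gamma>1 = Ce EqS L \<Gamma>2) \<and>
         (Ce EqS L \<Gamma>1 = Ce EqS L \<Gamma>2 \<longleftrightarrow> Ee EqS L \<Gamma>1 = Ee EqS L \<Gamma>2)"
proof -
  have "strongly_equiv L \<Gamma>1 \<Gamma>2 \<longleftrightarrow> H L \<Gamma>1 \<Gamma>2" using H_SE[OF assms] SE_H by blast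
  then show ?thesis unfolding equiv_e.simps Ce.simps Ee.simps Cs_H Es_H by blast
qed

lemma th_fact_mono: "\<forall>\<phi>\<in>\<Gamma>. factual \<phi> \<Longrightarrow> htsat_th X Y \<Gamma> \<Longrightarrow> X \<subseteq> X' \<Longrightarrow> X' \<subseteq> Y \<Longrightarrow> htsat_th X' Y \<Gamma>"
  unfolding htsat_th_def using fact_mono by blast

lemma Cu_mem: "(X,Y) \<in> Ce EqU L \<Gamma> \<longleftrightarrow> X \<subseteq> Y \<and> Y \<subseteq> L \<and> csat_th Y \<Gamma> \<and>
   (\<forall>X'. X \<subseteq> X' \<and> X' \<subset> Y \<longrightarrow> \<not> htsat_th X' Y \<Gamma>)"
proof (cases "Y \<subseteq> L")
  case True
  show ?thesis using thc_Cs[OF True, of \<Gamma> X] True unfolding Ce.simps ht_interps_def by auto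
next
  case False
  then show ?thesis unfolding Ce.simps ht_interps_def by auto
qed

lemma EeU: "Ee EqU L \<Gamma> = Ce EqU L \<Gamma>"
proof -
  have "(X,Y) \<in> Ee EqU L \<Gamma> \<longleftrightarrow> (X,Y) \<in> Ce EqU L \<Gamma>" for X Y
  proof -
    have "closed_in (Es L \<Gamma>) (X,Y) \<longleftrightarrow> (\<forall>X'. X \<subseteq> X' \<and> X' \<subseteq> Y \<longrightarrow> (X',Y) \<in> Es L \<Gamma>)"
      unfolding closed_in_def by simp
    also have "\<dots> \<longleftrightarrow> (X \<subseteq> Y \<longrightarrow> Y \<subseteq> L \<and> csat_th Y \<Gamma> \<and>
        (\<forall>X'. X \<subseteq> X' \<and> X' \<subset> Y \<longrightarrow> \<not> htsat_th X' Y \<Gamma>))"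
    proof
      assume a: "\<forall>X'. X \<subseteq> X' \<and> X' \<subseteq> Y \<longrightarrow> (X',Y) \<in> Es L \<Gamma>"
      show "X \<subseteq> Y \<longrightarrow> Y \<subseteq> L \<and> csat_th Y \<Gamma> \<and> (\<forall>X'. X \<subseteq> X' \<and> X' \<subset> Y \<longrightarrow> \<not> htsat_th X' Y \<Gamma>)"
      proof
        assume "X \<subseteq> Y"
        then have "(Y,Y) \<in> Es L \<Gamma>" using a by blast
        then have "Y \<subseteq> L \<and> csat_th Y \<Gamma>" unfolding Es_mem by simp
        moreover have "\<forall>X'. X \<subseteq> X' \<and> X' \<subset> Y \<longrightarrow> \<not> htsat_th X' Y \<Gamma>"
          using a unfolding Es_mem by blast
        ultimately show "Y \<subseteq> L \<and> csat_th Y \<Gamma> \<and> (\<forall>X'. X \<subseteq> X' \<and> X' \<subset> Y \<longrightarrow> \<not> htsat_th X' Y \<Gamma>)" by blast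
      qed
    next
      assume b: "X \<subseteq> Y \<longrightarrow> Y \<subseteq> L \<and> csat_th Y \<Gamma> \<and> (\<forall>X'. X \<subseteq> X' \<and> X' \<subset> Y \<longrightarrow> \<not> htsat_th X' Y \<Gamma>)"
      show "\<forall>X'. X \<subseteq> X' \<and> X' \<subseteq> Y \<longrightarrow> (X',Y) \<in> Es L \<Gamma>"
      proof (intro allI impI)
        fix X' assume x': "X \<subseteq> X' \<and> X' \<subseteq> Y"
        then have "Y \<subseteq> L \<and> csat_th Y \<Gamma> \<and> (\<forall>X'. X \<subseteq> X' \<and> X' \<subset> Y \<longrightarrow> \<not> htsat_th X' Y \<Gamma>)"
          using b by blast
        then show "(X',Y) \<in> Es L \<Gamma>" using x' unfolding Es_mem by blast
      qed
    qed
    finally have c: "closed_in (Es L \<Gamma>) (X,Y) \<longleftrightarrow> (X \<subseteq> Y \<longrightarrow> Y \<subseteq> L \<and> csat_th Y \<Gamma> \<and>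
        (\<forall>X'. X \<subseteq> X' \<and> X' \<subset> Y \<longrightarrow> \<not> htsat_th X' Y \<Gamma>))" .
    show ?thesis unfolding Cu_mem unfolding Ee.simps using c by (auto simp: ht_interps_def)
  qed
  then show ?thesis by (intro set_eqI) (metis surj_pair)
qed

lemma UE_Cu:
  assumes ue: "uniformly_equiv L \<Gamma>a \<Gamma>b" and m: "(X,Y) \<in> Ce EqU L \<Gamma>a"
  shows "(X,Y) \<in> Ce EqU L \<Gamma>b"
proof -
  from m have xy: "X \<subseteq> Y" and yl: "Y \<subseteq> L" and ca: "csat_th Y \<Gamma>a"
    and ma: "\<forall>X'. X \<subseteq> X' \<and> X' \<subset> Y \<longrightarrow> \<not> htsat_th X' Y \<Gamma>a"
    unfolding Cu_mem by auto
  have "Y \<in> answer_sets L (\<Gamma>a \<union> Atom ` Y)" using as_facts yl ca by blast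
  moreover have "answer_sets L (\<Gamma>a \<union> Atom ` Y) = answer_sets L (\<Gamma>b \<union> Atom ` Y)"
    using ue over_facts[OF yl] factual_facts[of Y] unfolding uniformly_equiv_def by blast
  ultimately have cb: "csat_th Y \<Gamma>b" using as_csat by fastforce
  have xl: "X \<subseteq> L" using xy yl by blast
  have "Y \<in> answer_sets L (\<Gamma>a \<union> Atom ` X)"
    unfolding answer_sets_def equilibrium_model_def using yl ca xy ma by auto
  moreover have "answer_sets L (\<Gamma>a \<union> Atom ` X) = answer_sets L (\<Gamma>b \<union> Atom ` X)"
    using ue over_facts[OF xl] factual_facts[of X] unfolding uniformly_equiv_def by blast
  ultimately have "Y \<in> answer_sets L (\<Gamma>b \<union> Atom ` X)" by simp
  then have "\<forall>X'. X \<subseteq> X' \<and> X' \<subset> Y \<longrightarrow> \<not> htsat_th X' Y \<Gamma>b"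
    unfolding answer_sets_def equilibrium_model_def by auto
  then show ?thesis unfolding Cu_mem using xy yl cb by blast
qed

lemma Cu_UE:
  assumes oa: "theory_over L \<Gamma>a" and ob: "theory_over L \<Gamma>b"
    and eq: "Ce EqU L \<Gamma>a = Ce EqU L \<Gamma>b" and fa: "\<forall>\<phi>\<in>\<Gamma>. factual \<phi>"
    and asa: "Y \<in> answer_sets L' (\<Gamma>a \<union> \<Gamma>)"
  shows "Y \<in> answer_sets L' (\<Gamma>b \<union> \<Gamma>)"
proof -
  from asa have yl': "Y \<subseteq> L'" and ca: "csat_th Y \<Gamma>a" and cg: "csat_th Y \<Gamma>"
    and mA: "\<forall>X. X \<subset> Y \<longrightarrow> \<not> (htsat_th X Y \<Gamma>a \<and> htsat_th X Y \<Gamma>)"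
    unfolding answer_sets_def equilibrium_model_def by auto
  define Y0 where "Y0 = Y \<inter> L"
  have ca0: "csat_th Y0 \<Gamma>a" using ca th_cloc[OF oa] unfolding Y0_def by blast
  have "(Y0,Y0) \<in> Ce EqU L \<Gamma>a" unfolding Cu_mem using ca0 unfolding Y0_def by blast
  then have "(Y0,Y0) \<in> Ce EqU L \<Gamma>b" using eq by blast
  then have "csat_th Y0 \<Gamma>b" unfolding Cu_mem by blast
  then have cb: "csat_th Y \<Gamma>b" using th_cloc[OF ob] unfolding Y0_def by blast
  have nb: "\<not> (htsat_th X Y \<Gamma>b \<and> htsat_th X Y \<Gamma>)" if x: "X \<subset> Y" for X
  proof
    assume hb: "htsat_th X Y \<Gamma>b \<and> htsat_th X Y \<Gamma>"
    define X0 where "X0 = X \<inter> L"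
    have hb0: "htsat_th X0 Y0 \<Gamma>b" using hb th_loc[OF ob] unfolding X0_def Y0_def by blast
    have x0y0: "X0 \<subseteq> Y0" using x unfolding X0_def Y0_def by blast
    show False
    proof (cases "X0 = Y0")
      case True
      then have "htsat_th X Y \<Gamma>a" using th_loc[OF oa, of X Y] ca0 unfolding X0_def Y0_def by simp
      then show False using mA x hb by blast
    next
      case False
      have "\<not> htsat_th X' Y0 \<Gamma>a" if x': "X0 \<subseteq> X' \<and> X' \<subset> Y0" for X'
      proof
        assume ha: "htsat_th X' Y0 \<Gamma>a"
        define X'' where "X'' = X' \<union> X"
        have i: "X'' \<inter> L = X'" using x' unfolding X''_def X0_def Y0_def by blast
        have "htsat_th X'' Y \<Gamma>a" using ha th_loc[OF oa, of X'' Y] i unfolding Y0_def by simp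
        moreover have "htsat_th X'' Y \<Gamma>" using th_fact_mono[OF fa, of X Y X''] hb x x'
          unfolding X''_def Y0_def by blast
        moreover have "X'' \<subset> Y"
        proof -
          have "X'' \<subseteq> Y" using x x' unfolding X''_def Y0_def by blast
          moreover have "X'' \<noteq> Y" using i x' unfolding Y0_def by blast
          ultimately show ?thesis by blast
        qed
        ultimately show False using mA by blast
      qed
      then have "(X0,Y0) \<in> Ce EqU L \<Gamma>a" unfolding Cu_mem using x0y0 ca0 unfolding Y0_def by blast
      then have "(X0,Y0) \<in> Ce EqU L \<Gamma>b" using eq by blast
      then have "\<not> htsat_th X0 Y0 \<Gamma>b" unfolding Cu_mem using x0y0 False by blast
      then show False using hb0 by blast
    qed
  qed
  show ?thesis unfolding answer_sets_def equilibrium_model_def using yl' cb cg nb by auto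
qed

lemma caseU:
  assumes oa: "theory_over L \<Gamma>1" and ob: "theory_over L \<Gamma>2"
  shows "(equiv_e EqU L \<Gamma>1 \<Gamma>2 \<longleftrightarrow> Ce EqU L \<Gamma>1 = Ce EqU L \<Gamma>2) \<and>
         (Ce EqU L \<Gamma>1 = Ce EqU L \<Gamma>2 \<longleftrightarrow> Ee EqU L \<Gamma>1 = Ee EqU L \<Gamma>2)"
proof -
  have "uniformly_equiv L \<Gamma>1 \<Gamma>2 \<longleftrightarrow> Ce EqU L \<Gamma>1 = Ce EqU L \<Gamma>2"
  proof
    assume ue: "uniformly_equiv L \<Gamma>1 \<Gamma>2"
    then have ue': "uniformly_equiv L \<Gamma>2 \<Gamma>1" unfolding uniformly_equiv_def by metis
    show "Ce EqU L \<Gamma>1 = Ce EqU L \<Gamma>2"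
      using UE_Cu[OF ue] UE_Cu[OF ue'] by (intro set_eqI) (metis surj_pair)
  next
    assume eq: "Ce EqU L \<Gamma>1 = Ce EqU L \<Gamma>2"
    show "uniformly_equiv L \<Gamma>1 \<Gamma>2" unfolding uniformly_equiv_def
      using Cu_UE[OF oa ob eq] Cu_UE[OF ob oa eq[symmetric]] by blast
  qed
  then show ?thesis unfolding equiv_e.simps EeU by blast
qed

theorem mainTheorem4:
  fixes L :: "'a set" and \<Gamma>1 \<Gamma>2 :: "'a form set" and e :: eqkind
  assumes "theory_over L \<Gamma>1" and "theory_over L \<Gamma>2"
  shows "(equiv_e e L \<Gamma>1 \<Gamma>2 \<longleftrightarrow> Ce e L \<Gamma>1 = Ce e L \<Gamma>2) \<and>
         (Ce e L \<Gamma>1 = Ce e L \<Gamma>2 \<longleftrightarrow> Ee e L \<Gamma>1 = Ee e L \<Gamma>2)"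
proof (cases e)
  case EqC then show ?thesis using caseC[of L \<Gamma>1 \<Gamma>2] by (simp only:)
next
  case EqA then show ?thesis using caseA[of L \<Gamma>1 \<Gamma>2] by (simp only:)
next
  case EqS then show ?thesis using caseS[OF assms] by (simp only:)
next
  case EqU then show ?thesis using caseU[OF assms] by (simp only:)
qed

end
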